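(* Let $|\psi\rangle$ be a pure three-qubit state and $\{i,j,k\}=\{A,B,C\}$. If the reduced state $\rho_{ij}$ is $F_3$ steerable, i.e. $S_{ij}>1$, then $\frac{\mathcal C_{ik}^2+\mathcal C_{jk}^2}{2}<\frac49$.
   Context: For a two-qubit state $\rho$ let $t_{kl}=\mathrm{Tr}[\rho\,\sigma_k\otimes\sigma_l]$ ($\sigma_k$ Pauli matrices) and $S(\rho)=\sum_{k,l=1}^3 t_{kl}^2$; $\rho_{ij}$ is the reduced state of qubits $i,j$ and $S_{ij}=S(\rho_{ij})$. A two-qubit state is called $F_3$ steerable if it violates the three-settings CJWR linear steering inequality, which (the maximum over settings being $\sqrt{S(\rho)}$) is equivalent to $S(\rho)>1$. $\mathcal C_{ij}$ is the Wootters concurrence of $\rho_{ij}$: $\mathcal C(\rho)=\max\{0,\lambda_1-\lambda_2-\lambda_3-\lambda_4\}$, with $\lambda_1\ge\dots\ge\lambda_4$ the square roots of the eigenvalues of $\rho(\sigma_2\otimes\sigma_2)\rho^*(\sigma_2\otimes\sigma_2)$. *)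

theory Defs
  imports "Jordan_Normal_Form.Char_Poly"
begin

text \<open>Qubits A, B, C are labelled 0, 1, 2. A three-qubit state is a vector of dimension 8
  in the computational basis, basis index = 4 a + 2 b + c for qubit values a (A), b (B), c (C).\<close>

definition pure_three_qubit :: "complex vec \<Rightarrow> bool" where
  "pure_three_qubit psi \<longleftrightarrow> dim_vec psi = 8 \<and> (\<Sum>n<8. (cmod (psi $ n))\<^sup>2) = 1"

definition qweight :: "nat \<Rightarrow> nat" where
  "qweight q = 2 ^ (2 - q)"

definition bidx :: "nat \<Rightarrow> nat \<Rightarrow> nat \<Rightarrow> nat \<Rightarrow> nat \<Rightarrow> nat" where
  "bidx p q x y r = x * qweight p + y * qweight q + r * qweight (3 - p - q)"

text \<open>Reduced two-qubit state of qubits p (first factor) and q (second factor) of the pure state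
  psi; the 4x4 matrix is indexed by 2 x_p + x_q.\<close>
definition reduced :: "complex vec \<Rightarrow> nat \<Rightarrow> nat \<Rightarrow> complex mat" where
  "reduced psi p q = mat 4 4 (\<lambda>(m, n).
     \<Sum>r<2. psi $ bidx p q (m div 2) (m mod 2) r * cnj (psi $ bidx p q (n div 2) (n mod 2) r))"

definition pauli :: "nat \<Rightarrow> complex mat" where
  "pauli k = (if k = 1 then mat_of_rows_list 2 [[0, 1], [1, 0]]
              else if k = 2 then mat_of_rows_list 2 [[0, - \<i>], [\<i>, 0]]
              else if k = 3 then mat_of_rows_list 2 [[1, 0], [0, -1]]
              else 1\<^sub>m 2)"

definition kron2 :: "complex mat \<Rightarrow> complex mat \<Rightarrow> complex mat" where
  "kron2 X Y = mat 4 4 (\<lambda>(m, n). X $$ (m div 2, n div 2) * Y $$ (m mod 2, n mod 2))"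

definition tcorr :: "complex mat \<Rightarrow> nat \<Rightarrow> nat \<Rightarrow> real" where
  "tcorr rho k l = Re (\<Sum>m<4. (rho * kron2 (pauli k) (pauli l)) $$ (m, m))"

definition Sval :: "complex mat \<Rightarrow> real" where
  "Sval rho = (\<Sum>k\<in>{1..3}. \<Sum>l\<in>{1..3}. (tcorr rho k l)\<^sup>2)"

definition F3_steerable :: "complex mat \<Rightarrow> bool" where
  "F3_steerable rho \<longleftrightarrow> Sval rho > 1"

definition mconj :: "complex mat \<Rightarrow> complex mat" where
  "mconj X = mat (dim_row X) (dim_col X) (\<lambda>(m, n). cnj (X $$ (m, n)))"

definition wootters_R :: "complex mat \<Rightarrow> complex mat" where
  "wootters_R rho = (let Y = kron2 (pauli 2) (pauli 2) in rho * Y * mconj rho * Y)"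

definition eigvals_list :: "complex mat \<Rightarrow> complex list" where
  "eigvals_list M = (SOME es. length es = dim_row M \<and> char_poly M = (\<Prod>a\<leftarrow>es. [:- a, 1:]))"

definition concurrence :: "complex mat \<Rightarrow> real" where
  "concurrence rho = (let ls = rev (sort (map (\<lambda>e. sqrt (Re e)) (eigvals_list (wootters_R rho))))
     in max 0 (ls ! 0 - ls ! 1 - ls ! 2 - ls ! 3))"

end

theory Submission imports Defs begin
interpretation cpoly: comm_ring_hom "\<lambda>a::'a::comm_ring_1. [:a:]"
  by unfold_locales (auto simp: one_pCons)

lemma char_poly_matrix_eq:
  assumes "M \<in> carrier_mat k k"
  shows "char_poly_matrix M = [:0,1:] \<cdot>\<^sub>m 1\<^sub>m k - map_mat (\<lambda>a. [:a:]) M"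
  unfolding char_poly_matrix_def using assms
  by (intro eq_matI) auto

lemma char_poly_mult_swap:
  fixes A :: "'a::idom mat"
  assumes A: "A \<in> carrier_mat n m" and B: "B \<in> carrier_mat m n"
  shows "char_poly (A * B) * [:0,1:]^m = [:0,1:]^n * char_poly (B * A)"
proof -
  define X :: "'a poly" where "X = [:0,1:]"
  define A' where "A' = map_mat (\<lambda>a. [:a:]) A"
  define B' where "B' = map_mat (\<lambda>a. [:a:]) B"
  have A': "A' \<in> carrier_mat n m" and B': "B' \<in> carrier_mat m n"
    using A B by (auto simp: A'_def B'_def)
  have cAB: "char_poly (A * B) = det (X \<cdot>\<^sub>m 1\<^sub>m n - A' * B')"
    unfolding char_poly_def X_def A'_def B'_def
    using A B by (subst char_poly_matrix_eq[of _ n]) (auto simp: cpoly.mat_hom_mult)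
  have cBA: "char_poly (B * A) = det (X \<cdot>\<^sub>m 1\<^sub>m m - B' * A')"
    unfolding char_poly_def X_def A'_def B'_def
    using A B by (subst char_poly_matrix_eq[of _ m]) (auto simp: cpoly.mat_hom_mult)
  define Big where "Big = four_block_mat (1\<^sub>m n) A' B' (X \<cdot>\<^sub>m 1\<^sub>m m)"
  define L1 where "L1 = four_block_mat (1\<^sub>m n) (0\<^sub>m n m) (- B') (1\<^sub>m m)"
  define L2 where "L2 = four_block_mat (X \<cdot>\<^sub>m 1\<^sub>m n) (- A') (0\<^sub>m m n) (1\<^sub>m m)"
  have Bigc: "Big \<in> carrier_mat (n+m) (n+m)" unfolding Big_def using A' B' by auto
  have L1c: "L1 \<in> carrier_mat (n+m) (n+m)" unfolding L1_def using A' B' by auto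
  have L2c: "L2 \<in> carrier_mat (n+m) (n+m)" unfolding L2_def using A' B' by auto
  have "L1 * Big = four_block_mat (1\<^sub>m n) A' (0\<^sub>m m n) (X \<cdot>\<^sub>m 1\<^sub>m m - B' * A')"
    unfolding L1_def Big_def
    apply (subst mult_four_block_mat[OF one_carrier_mat zero_carrier_mat uminus_carrier_mat[OF B'] one_carrier_mat one_carrier_mat A' B' smult_carrier_mat[OF one_carrier_mat]])
    using A' B' by (auto intro!: cong_four_block_mat simp: uminus_mult_left_mat)
  moreover have "det (four_block_mat (1\<^sub>m n) A' (0\<^sub>m m n) (X \<cdot>\<^sub>m 1\<^sub>m m - B' * A')) = char_poly (B * A)"
    using A' B' cBA by (subst det_four_block_mat_lower_left_zero[OF one_carrier_mat A' refl]) auto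
  ultimately have "det (L1 * Big) = char_poly (B * A)" by simp
  moreover have "det L1 = 1" unfolding L1_def
    using B' by (subst det_four_block_mat_upper_right_zero[OF one_carrier_mat refl uminus_carrier_mat[OF B']]) auto
  ultimately have 1: "det Big = char_poly (B * A)"
    using det_mult[OF L1c Bigc] by simp
  have "L2 * Big = four_block_mat (X \<cdot>\<^sub>m 1\<^sub>m n - A' * B') (0\<^sub>m n m) B' (X \<cdot>\<^sub>m 1\<^sub>m m)"
    unfolding L2_def Big_def
    apply (subst mult_four_block_mat[OF smult_carrier_mat[OF one_carrier_mat] uminus_carrier_mat[OF A'] zero_carrier_mat one_carrier_mat one_carrier_mat A' B' smult_carrier_mat[OF one_carrier_mat]])
    using A' B' by (auto intro!: cong_four_block_mat simp: uminus_mult_left_mat)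
  moreover have "det (four_block_mat (X \<cdot>\<^sub>m 1\<^sub>m n - A' * B') (0\<^sub>m n m) B' (X \<cdot>\<^sub>m 1\<^sub>m m)) = char_poly (A * B) * X ^ m"
    using A' B' cAB by (subst det_four_block_mat_upper_right_zero[OF _ refl B']) auto
  ultimately have "det (L2 * Big) = char_poly (A * B) * X ^ m" by simp
  moreover have "det L2 = X ^ n" unfolding L2_def
    using A' by (subst det_four_block_mat_lower_left_zero[OF _ uminus_carrier_mat[OF A'] refl]) auto
  ultimately show ?thesis
    using det_mult[OF L2c Bigc] 1 unfolding X_def by simp
qed
lemma det_2x2:
  fixes A :: "'a::comm_ring_1 mat"
  assumes A: "A \<in> carrier_mat 2 2"
  shows "det A = A $$ (0,0) * A $$ (1,1) - A $$ (0,1) * A $$ (1,0)"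
proof -
  have "det A = (\<Sum>j<2. A $$ (0,j) * cofactor A 0 j)"
    by (rule laplace_expansion_row[OF A]) simp
  also have "\<dots> = A $$ (0,0) * A $$ (1,1) - A $$ (0,1) * A $$ (1,0)"
    using A unfolding cofactor_def
    by (simp add: numeral_2_eq_2 det_single mat_delete_carrier mat_delete_def)
  finally show ?thesis .
qed

lemma poly2_ident:
  fixes a b c d :: "'a::comm_ring_1"
  shows "[:-a,1:]*[:-d,1:] - [:-b:]*[:-c:] = [:a*d - b*c, -(a+d), 1:]"
  by simp

lemma char_poly_2x2:
  fixes f :: "nat \<times> nat \<Rightarrow> 'a::comm_ring_1"
  shows "char_poly (mat 2 2 f) = [: f(0,0)*f(1,1) - f(0,1)*f(1,0), -(f(0,0)+f(1,1)), 1:]"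
proof -
  have c: "char_poly_matrix (mat 2 2 f) \<in> carrier_mat 2 2" by simp
  have e: "char_poly_matrix (mat 2 2 f) $$ (0,0) = [:-f(0,0), 1:]"
     "char_poly_matrix (mat 2 2 f) $$ (1,1) = [:-f(1,1), 1:]"
     "char_poly_matrix (mat 2 2 f) $$ (0,1) = [:-f(0,1):]"
     "char_poly_matrix (mat 2 2 f) $$ (1,0) = [:-f(1,0):]"
    unfolding char_poly_matrix_def by (simp_all add: numeral_2_eq_2)
  show ?thesis unfolding char_poly_def det_2x2[OF c] e poly2_ident ..
qed

definition rho_of :: "(nat \<Rightarrow> nat \<Rightarrow> complex) \<Rightarrow> complex mat" where
  "rho_of v = mat 4 4 (\<lambda>(m, n). \<Sum>r<2. v r m * cnj (v r n))"

definition gg :: "(nat \<Rightarrow> nat \<Rightarrow> complex) \<Rightarrow> nat \<Rightarrow> nat \<Rightarrow> complex" where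
  "gg v r s = - (v r 0 * v s 3) + v r 1 * v s 2 + v r 2 * v s 1 - v r 3 * v s 0"

definition yv :: "nat \<Rightarrow> nat \<Rightarrow> complex" where
  "yv m n = (if (m = 0 \<and> n = 3) \<or> (m = 3 \<and> n = 0) then -1
      else if (m = 1 \<and> n = 2) \<or> (m = 2 \<and> n = 1) then 1 else 0)"

lemma less4_cases: "(m::nat) < 4 \<Longrightarrow> m = 0 \<or> m = 1 \<or> m = 2 \<or> m = 3" by auto
lemma less2_cases: "(m::nat) < 2 \<Longrightarrow> m = 0 \<or> m = 1" by auto

lemma Y_eq: "kron2 (pauli 2) (pauli 2) = mat 4 4 (\<lambda>(m,n). yv m n)"
proof (rule eq_matI)
  fix i j assume i: "i < dim_row (mat 4 4 (\<lambda>(m,n). yv m n))" and j: "j < dim_col (mat 4 4 (\<lambda>(m,n). yv m n))"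
  hence "i < 4" "j < 4" by auto
  thus "kron2 (pauli 2) (pauli 2) $$ (i, j) = mat 4 4 (\<lambda>(m,n). yv m n) $$ (i, j)"
    using less4_cases[of i] less4_cases[of j]
    by (auto simp: kron2_def pauli_def yv_def mat_of_rows_list_def)
qed (auto simp: kron2_def)

lemma sum4: "(\<Sum>m<(4::nat). f m) = f 0 + f 1 + f 2 + (f 3 :: 'a::comm_monoid_add)"
  by (simp add: eval_nat_numeral add.assoc)
lemma sum2: "(\<Sum>m<(2::nat). f m) = f 0 + (f 1 :: 'a::comm_monoid_add)"
  by (simp add: eval_nat_numeral)

context
  fixes v :: "nat \<Rightarrow> nat \<Rightarrow> complex"
begin

definition "VV = mat 4 2 (\<lambda>(m,r). v r m)"
definition "Vh = mat 2 4 (\<lambda>(r,m). cnj (v r m))"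
definition "Vc = mat 4 2 (\<lambda>(m,r). cnj (v r m))"
definition "Vt = mat 2 4 (\<lambda>(r,m). v r m)"
definition "YY = mat 4 4 (\<lambda>(m,n). yv m n)"

lemma carriers: "VV \<in> carrier_mat 4 2" "Vh \<in> carrier_mat 2 4" "Vc \<in> carrier_mat 4 2"
  "Vt \<in> carrier_mat 2 4" "YY \<in> carrier_mat 4 4"
  by (auto simp: VV_def Vh_def Vc_def Vt_def YY_def)

lemma rho_VV: "rho_of v = VV * Vh"
  by (rule eq_matI) (auto simp: rho_of_def VV_def Vh_def scalar_prod_def sum2 lessThan_atLeast0)

lemma mconj_rho: "mconj (rho_of v) = Vc * Vt"
  by (rule eq_matI) (auto simp: mconj_def rho_of_def Vc_def Vt_def scalar_prod_def sum2 lessThan_atLeast0)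

lemma G_eq: "Vt * YY * VV = mat 2 2 (\<lambda>(r,s). gg v r s)"
  by (rule eq_matI) (auto simp: Vt_def YY_def VV_def scalar_prod_def sum4 lessThan_atLeast0[symmetric] yv_def gg_def)

lemma Gc_eq: "Vh * YY * Vc = mat 2 2 (\<lambda>(r,s). cnj (gg v r s))"
  by (rule eq_matI) (auto simp: Vh_def YY_def Vc_def scalar_prod_def sum4 lessThan_atLeast0[symmetric] yv_def gg_def)

definition "Bm = Vh * YY * Vc * Vt * YY"

lemma R_eq: "wootters_R (rho_of v) = VV * Bm"
proof -
  note c = carriers
  have hy: "Vh * YY \<in> carrier_mat 2 4" and ct: "Vc * Vt \<in> carrier_mat 4 4"
    using c by (auto intro!: mult_carrier_mat)
  have w: "Vh * YY * (Vc * Vt) \<in> carrier_mat 2 4" using hy ct by (auto intro!: mult_carrier_mat)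
  have "wootters_R (rho_of v) = VV * Vh * YY * (Vc * Vt) * YY"
    unfolding wootters_R_def Let_def Y_eq YY_def[symmetric] mconj_rho unfolding rho_VV ..
  also have "VV * Vh * YY = VV * (Vh * YY)" by (rule assoc_mult_mat[OF c(1) c(2) c(5)])
  also have "VV * (Vh * YY) * (Vc * Vt) = VV * (Vh * YY * (Vc * Vt))" by (rule assoc_mult_mat[OF c(1) hy ct])
  also have "VV * (Vh * YY * (Vc * Vt)) * YY = VV * (Vh * YY * (Vc * Vt) * YY)" by (rule assoc_mult_mat[OF c(1) w c(5)])
  also have "Vh * YY * (Vc * Vt) = Vh * YY * Vc * Vt" by (rule assoc_mult_mat[OF hy c(3) c(4), symmetric])
  finally show ?thesis unfolding Bm_def .
qed

lemma BA_eq: "Bm * VV = mat 2 2 (\<lambda>(r,s). \<Sum>t<2. cnj (gg v r t) * gg v t s)"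
proof -
  note c = carriers
  have x: "Vh * YY * Vc \<in> carrier_mat 2 2" and xt: "Vh * YY * Vc * Vt \<in> carrier_mat 2 4"
    and ty: "Vt * YY \<in> carrier_mat 2 4" using c by (auto intro!: mult_carrier_mat)
  have "Bm * VV = Vh * YY * Vc * Vt * YY * VV" unfolding Bm_def ..
  also have "\<dots> = Vh * YY * Vc * Vt * (YY * VV)" by (rule assoc_mult_mat[OF xt c(5) c(1)])
  also have "\<dots> = Vh * YY * Vc * (Vt * (YY * VV))" by (rule assoc_mult_mat[OF x c(4) mult_carrier_mat[OF c(5) c(1)]])
  also have "Vt * (YY * VV) = Vt * YY * VV" by (rule assoc_mult_mat[OF c(4) c(5) c(1), symmetric])
  also have "Vh * YY * Vc * (Vt * YY * VV) = mat 2 2 (\<lambda>(r,s). cnj (gg v r s)) * mat 2 2 (\<lambda>(r,s). gg v r s)"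
    by (simp add: G_eq Gc_eq)
  also have "\<dots> = mat 2 2 (\<lambda>(r,s). \<Sum>t<2. cnj (gg v r t) * gg v t s)"
    by (rule eq_matI) (auto simp: scalar_prod_def sum2 lessThan_atLeast0[symmetric])
  finally show ?thesis .
qed

end


definition FF :: "(nat \<Rightarrow> nat \<Rightarrow> complex) \<Rightarrow> real" where
  "FF v = (\<Sum>r<2. \<Sum>s<2. (cmod (gg v r s))\<^sup>2)"
definition DD :: "(nat \<Rightarrow> nat \<Rightarrow> complex) \<Rightarrow> complex" where
  "DD v = gg v 0 0 * gg v 1 1 - gg v 0 1 * gg v 1 0"

lemma gg_sym: "gg v r s = gg v s r"
  unfolding gg_def by (simp add: algebra_simps)

lemma cmod_sq_cnj: "complex_of_real ((cmod z)\<^sup>2) = cnj z * z"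
  using complex_norm_square[of z] by (simp add: mult.commute)

lemma det_ident:
  fixes a b c d ca cb cc cd :: complex
  shows "(ca * a + cb * c) * (cc * b + cd * d) - (ca * b + cb * d) * (cc * a + cd * c)
    = (ca * cd - cb * cc) * (a * d - b * c)"
  by (simp add: algebra_simps)

lemma char_BA: "char_poly (Bm v * VV v) = [: complex_of_real ((cmod (DD v))\<^sup>2), - complex_of_real (FF v), 1:]"
proof -
  have "char_poly (Bm v * VV v) = [: (\<Sum>t<2. cnj (gg v 0 t) * gg v t 0) * (\<Sum>t<2. cnj (gg v 1 t) * gg v t 1)
     - (\<Sum>t<2. cnj (gg v 0 t) * gg v t 1) * (\<Sum>t<2. cnj (gg v 1 t) * gg v t 0),
     - ((\<Sum>t<2. cnj (gg v 0 t) * gg v t 0) + (\<Sum>t<2. cnj (gg v 1 t) * gg v t 1)), 1:]"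
    unfolding BA_eq char_poly_2x2 by simp
  also have "(\<Sum>t<2. cnj (gg v 0 t) * gg v t 0) * (\<Sum>t<2. cnj (gg v 1 t) * gg v t 1)
     - (\<Sum>t<2. cnj (gg v 0 t) * gg v t 1) * (\<Sum>t<2. cnj (gg v 1 t) * gg v t 0)
     = complex_of_real ((cmod (DD v))\<^sup>2)"
    unfolding cmod_sq_cnj DD_def sum2 complex_cnj_mult complex_cnj_diff by (rule det_ident)
  also have "(\<Sum>t<2. cnj (gg v 0 t) * gg v t 0) + (\<Sum>t<2. cnj (gg v 1 t) * gg v t 1)
     = complex_of_real (FF v)"
    unfolding FF_def sum2 of_real_add cmod_sq_cnj using gg_sym[of v 0 1] by (simp add: algebra_simps)
  finally show ?thesis .
qed

lemma FF_ge: "2 * cmod (DD v) \<le> FF v"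
proof -
  have a: "cmod (DD v) \<le> cmod (gg v 0 0) * cmod (gg v 1 1) + cmod (gg v 0 1) * cmod (gg v 1 0)"
    unfolding DD_def by (metis norm_mult norm_triangle_ineq4)
  have "2 * (cmod (gg v 0 0) * cmod (gg v 1 1)) \<le> (cmod (gg v 0 0))\<^sup>2 + (cmod (gg v 1 1))\<^sup>2"
    using sum_squares_bound[of "cmod (gg v 0 0)" "cmod (gg v 1 1)"] by simp
  moreover have "2 * (cmod (gg v 0 1) * cmod (gg v 1 0)) \<le> (cmod (gg v 0 1))\<^sup>2 + (cmod (gg v 1 0))\<^sup>2"
    using sum_squares_bound[of "cmod (gg v 0 1)" "cmod (gg v 1 0)"] by simp
  ultimately show ?thesis using a unfolding FF_def sum2 by linarith
qed


lemma lin2: "[:-a,1:]*[:-d,1:] = [:a*d, -(a+d), 1::'a::comm_ring_1:]"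
  by simp

lemma proots_lin_prod: "proots (\<Prod>a\<leftarrow>es. [:-a, 1::complex:]) = mset es"
proof (induction es)
  case (Cons a es)
  have nz1: "\<And>a. [:-a, 1::complex:] \<noteq> 0" by simp
  have nz: "(\<Prod>a\<leftarrow>es. [:-a, 1::complex:]) \<noteq> 0"
    unfolding prod_list_zero_iff using nz1 by (metis (no_types, lifting) ex_map_conv)
  have "proots (\<Prod>a\<leftarrow>a # es. [:-a, 1::complex:]) = proots [:-a,1:] + proots (\<Prod>a\<leftarrow>es. [:-a, 1::complex:])"
    by (simp only: list.map prod_list.Cons proots_mult[OF nz1 nz])
  moreover have "proots [:-a,1::complex:] = {#a#}" using proots_linear_factor[of "-a"] by simp
  ultimately show ?case using Cons.IH by simp
qed simp

lemma pow4_swap: "(x::'a::comm_monoid_mult)^4 * p = (x^2 * p) * x^2"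
proof -
  have "x^4 = x^2 * x^2" using power_add[of x 2 2] by simp
  thus ?thesis by (simp add: mult_ac)
qed

lemma conc_rho_of:
  "(concurrence (rho_of v))\<^sup>2 = FF v - 2 * cmod (DD v)"
proof -
  define F where "F = FF v"
  define h where "h = cmod (DD v)"
  define s where "s = sqrt (F\<^sup>2 - 4 * h\<^sup>2)"
  define r1 where "r1 = (F + s) / 2"
  define r2 where "r2 = (F - s) / 2"
  have h0: "0 \<le> h" unfolding h_def by simp
  have Fh: "2 * h \<le> F" unfolding F_def h_def by (rule FF_ge)
  have "(2*h)\<^sup>2 \<le> F\<^sup>2" by (rule power_mono[OF Fh]) (use h0 in simp)
  moreover have "(2*h)\<^sup>2 = 4*h\<^sup>2" by (simp add: power2_eq_square)
  ultimately have hF: "4*h\<^sup>2 \<le> F\<^sup>2" by linarith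
  hence s2: "s\<^sup>2 = F\<^sup>2 - 4 * h\<^sup>2" unfolding s_def by (simp add: power_mult_distrib)
  have s0: "0 \<le> s" unfolding s_def using hF by simp
  have sF: "s \<le> F" by (rule power2_le_imp_le) (use s2 h0 Fh in auto)
  have r12: "r1 * r2 = h\<^sup>2" unfolding r1_def r2_def using s2 by (simp add: field_simps power2_eq_square)
  have r2_0: "0 \<le> r2" unfolding r2_def using sF by simp
  have r21: "r2 \<le> r1" unfolding r1_def r2_def using s0 by simp
  define R where "R = wootters_R (rho_of v)"
  define X :: "complex poly" where "X = [:0,1:]"
  have cBA: "char_poly (Bm v * VV v) = [:- complex_of_real r1, 1:] * [:- complex_of_real r2, 1:]"
  proof -
    have e1: "complex_of_real r1 * complex_of_real r2 = complex_of_real ((cmod (DD v))\<^sup>2)"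
      using r12 unfolding h_def by (simp flip: of_real_mult)
    have e2: "complex_of_real r1 + complex_of_real r2 = complex_of_real (FF v)"
    proof -
      have "r1 + r2 = F" unfolding r1_def r2_def by (simp add: field_simps)
      thus ?thesis unfolding F_def by (metis of_real_add)
    qed
    show ?thesis unfolding char_BA lin2 e1 e2 ..
  qed
  have "char_poly R * X^2 = X^4 * char_poly (Bm v * VV v)"
    unfolding R_def R_eq X_def
  proof (rule char_poly_mult_swap)
    show "VV v \<in> carrier_mat 4 2" by (rule carriers)
    show "Bm v \<in> carrier_mat 2 4" unfolding Bm_def using carriers by (auto intro!: mult_carrier_mat)
  qed
  also have "\<dots> = (X^2 * ([:- complex_of_real r1, 1:] * [:- complex_of_real r2, 1:])) * X^2"
    unfolding cBA by (rule pow4_swap)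
  finally have "char_poly R = X^2 * ([:- complex_of_real r1, 1:] * [:- complex_of_real r2, 1:])"
    by (rule mult_right_cancel[THEN iffD1, rotated]) (simp add: X_def)
  hence cR: "char_poly R = (\<Prod>a\<leftarrow>[0, 0, complex_of_real r1, complex_of_real r2]. [:-a, 1:])"
    unfolding X_def by (simp add: power2_eq_square mult.assoc)
  have dR: "dim_row R = 4" unfolding R_def R_eq by (simp add: VV_def)
  define es where "es = eigvals_list R"
  have "length es = dim_row R \<and> char_poly R = (\<Prod>a\<leftarrow>es. [:- a, 1:])"
    unfolding es_def eigvals_list_def
    by (rule someI[of _ "[0, 0, complex_of_real r1, complex_of_real r2]"]) (use cR dR in simp)
  hence "mset es = mset [0, 0, complex_of_real r1, complex_of_real r2]"
  proof -
    assume a: "length es = dim_row R \<and> char_poly R = (\<Prod>a\<leftarrow>es. [:- a, 1:])"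
    have "proots (\<Prod>a\<leftarrow>es. [:- a, 1:]) = proots (\<Prod>a\<leftarrow>[0, 0, complex_of_real r1, complex_of_real r2]. [:-a, 1:])"
      using a cR by simp
    thus ?thesis unfolding proots_lin_prod .
  qed
  hence "mset (map (\<lambda>e. sqrt (Re e)) es) = mset [0, 0, sqrt r2, sqrt r1]"
    by (simp add: add_mset_commute)
  hence "sort (map (\<lambda>e. sqrt (Re e)) es) = [0, 0, sqrt r2, sqrt r1]"
    by (intro properties_for_sort) (use r2_0 r21 in \<open>auto intro: real_sqrt_le_mono\<close>)
  hence "concurrence (rho_of v) = sqrt r1 - sqrt r2"
    unfolding concurrence_def Let_def R_def[symmetric] es_def[symmetric] using r21 r2_0 real_sqrt_le_mono[OF r21] by simp
  hence "(concurrence (rho_of v))\<^sup>2 = r1 + r2 - 2 * sqrt (r1 * r2)"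
    using r2_0 r21 by (simp add: power2_diff real_sqrt_mult)
  also have "\<dots> = F - 2 * h"
  proof -
    have "r1 + r2 = F" unfolding r1_def r2_def by (simp add: field_simps)
    thus ?thesis unfolding r12 using h0 by simp
  qed
  finally show ?thesis unfolding F_def h_def .
qed


lemma FF_cnj: "complex_of_real (FF v) = (\<Sum>r<2. \<Sum>s<2. cnj (gg v r s) * gg v r s)"
  unfolding FF_def of_real_sum cmod_sq_cnj ..

definition "vij T r m = T (m div 2) (m mod 2) r"
definition "vik T r m = T (m div 2) r (m mod 2)"
definition "vjk T r m = T r (m div 2) (m mod 2)"
definition "aa T = (\<Sum>m<4. cnj (vij T 0 m) * vij T 0 m)"
definition "bb T = (\<Sum>m<4. cnj (vij T 1 m) * vij T 1 m)"
definition "cc T = (\<Sum>m<4. vij T 0 m * cnj (vij T 1 m))"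

lemma I2c: "complex_of_real (FF (vik T)) + complex_of_real (FF (vjk T)) = 4 * (aa T * bb T - cc T * cnj (cc T))"
  unfolding FF_cnj aa_def bb_def cc_def sum2 sum4 gg_def vij_def vik_def vjk_def
  by (simp add: algebra_simps)


lemma I3: "DD (vik T) = DD (vij T)" "DD (vjk T) = DD (vij T)"
  unfolding DD_def gg_def vij_def vik_def vjk_def
  by (simp_all add: algebra_simps)

lemma sum13: "(\<Sum>k\<in>{1..3::nat}. f k) = f 1 + f 2 + (f 3::'a::comm_monoid_add)"
proof -
  have "{1..3::nat} = {1,2,3}" by auto
  thus ?thesis by (simp add: add.assoc)
qed

lemma Re_cnj: "complex_of_real (Re z) = (z + cnj z) / 2"
  by (simp add: complex_add_cnj)

lemma trace_expl: "(\<Sum>m<4. (mat 4 4 f * kron2 (pauli k) (pauli l)) $$ (m, m)) =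
   (\<Sum>m<4. \<Sum>n<4. f (m,n) * (pauli k $$ (n div 2, m div 2) * pauli l $$ (n mod 2, m mod 2)))"
  by (simp add: kron2_def scalar_prod_def lessThan_atLeast0)

lemma pauli_entries:
  "pauli 1 $$ (0,0) = 0" "pauli 1 $$ (0,1) = 1" "pauli 1 $$ (1,0) = 1" "pauli 1 $$ (1,1) = 0"
  "pauli 2 $$ (0,0) = 0" "pauli 2 $$ (0,1) = -\<i>" "pauli 2 $$ (1,0) = \<i>" "pauli 2 $$ (1,1) = 0"
  "pauli 3 $$ (0,0) = 1" "pauli 3 $$ (0,1) = 0" "pauli 3 $$ (1,0) = 0" "pauli 3 $$ (1,1) = -1"
  by (simp_all add: pauli_def mat_of_rows_list_def)

lemma Re_sq4: "4 * (complex_of_real (Re z))^2 = (z + cnj z)^2"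
  by (simp add: complex_add_cnj power2_eq_square)

lemma tr_11: "(\<Sum>m<4. \<Sum>n<4. f (m,n) * (pauli 1 $$ (n div 2, m div 2) * pauli 1 $$ (n mod 2, m mod 2))) = f (0,3) + f (1,2) + f (2,1) + f (3,0)"
  by (simp add: sum4 pauli_entries pauli_entries[unfolded One_nat_def])

lemma tr_12: "(\<Sum>m<4. \<Sum>n<4. f (m,n) * (pauli 1 $$ (n div 2, m div 2) * pauli 2 $$ (n mod 2, m mod 2))) = \<i> * f (0,3) - \<i> * f (1,2) + \<i> * f (2,1) - \<i> * f (3,0)"
  by (simp add: sum4 pauli_entries pauli_entries[unfolded One_nat_def])

lemma tr_13: "(\<Sum>m<4. \<Sum>n<4. f (m,n) * (pauli 1 $$ (n div 2, m div 2) * pauli 3 $$ (n mod 2, m mod 2))) = f (0,2) - f (1,3) + f (2,0) - f (3,1)"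
  by (simp add: sum4 pauli_entries pauli_entries[unfolded One_nat_def])

lemma tr_21: "(\<Sum>m<4. \<Sum>n<4. f (m,n) * (pauli 2 $$ (n div 2, m div 2) * pauli 1 $$ (n mod 2, m mod 2))) = \<i> * f (0,3) + \<i> * f (1,2) - \<i> * f (2,1) - \<i> * f (3,0)"
  by (simp add: sum4 pauli_entries pauli_entries[unfolded One_nat_def])

lemma tr_22: "(\<Sum>m<4. \<Sum>n<4. f (m,n) * (pauli 2 $$ (n div 2, m div 2) * pauli 2 $$ (n mod 2, m mod 2))) = - f (0,3) + f (1,2) + f (2,1) - f (3,0)"
  by (simp add: sum4 pauli_entries pauli_entries[unfolded One_nat_def])

lemma tr_23: "(\<Sum>m<4. \<Sum>n<4. f (m,n) * (pauli 2 $$ (n div 2, m div 2) * pauli 3 $$ (n mod 2, m mod 2))) = \<i> * f (0,2) - \<i> * f (1,3) - \<i> * f (2,0) + \<i> * f (3,1)"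
  by (simp add: sum4 pauli_entries pauli_entries[unfolded One_nat_def])

lemma tr_31: "(\<Sum>m<4. \<Sum>n<4. f (m,n) * (pauli 3 $$ (n div 2, m div 2) * pauli 1 $$ (n mod 2, m mod 2))) = f (0,1) + f (1,0) - f (2,3) - f (3,2)"
  by (simp add: sum4 pauli_entries pauli_entries[unfolded One_nat_def])

lemma tr_32: "(\<Sum>m<4. \<Sum>n<4. f (m,n) * (pauli 3 $$ (n div 2, m div 2) * pauli 2 $$ (n mod 2, m mod 2))) = \<i> * f (0,1) - \<i> * f (1,0) - \<i> * f (2,3) + \<i> * f (3,2)"
  by (simp add: sum4 pauli_entries pauli_entries[unfolded One_nat_def])

lemma tr_33: "(\<Sum>m<4. \<Sum>n<4. f (m,n) * (pauli 3 $$ (n div 2, m div 2) * pauli 3 $$ (n mod 2, m mod 2))) = f (0,0) - f (1,1) - f (2,2) + f (3,3)"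
  by (simp add: sum4 pauli_entries pauli_entries[unfolded One_nat_def])

lemma divmod_facts: "(0::nat) div 2 = 0" "(1::nat) div 2 = 0" "(2::nat) div 2 = 1" "(3::nat) div 2 = 1"
  "(0::nat) mod 2 = 0" "(1::nat) mod 2 = 1" "(2::nat) mod 2 = 0" "(3::nat) mod 2 = 1"
  by simp_all

lemma iR1: "\<i> * x + \<i> * y = \<i> * (x + y)" by (simp add: algebra_simps)
lemma iR2: "\<i> * x - \<i> * y = \<i> * (x - y)" by (simp add: algebra_simps)
lemma iR3: "- \<i> * x = \<i> * (- x)" by simp
lemma iR5: "(\<i> * x) * (\<i> * y) = - (x * y)" by (simp add: algebra_simps)

lemma Re_prod4: "4 * (complex_of_real (Re z) * complex_of_real (Re w)) = (z + cnj z) * (w + cnj w)"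
  by (simp add: complex_add_cnj algebra_simps)

definition zq :: "(nat \<Rightarrow> complex) \<Rightarrow> nat \<Rightarrow> nat \<Rightarrow> complex" where
  "zq a k l = (\<Sum>m<4. \<Sum>n<4. (\<lambda>(m,n). a m * cnj (a n)) (m,n) *
      (pauli k $$ (n div 2, m div 2) * pauli l $$ (n mod 2, m mod 2)))"

definition Qf :: "(nat \<Rightarrow> complex) \<Rightarrow> (nat \<Rightarrow> complex) \<Rightarrow> real" where
  "Qf a b = (\<Sum>k\<in>{1..3}. \<Sum>l\<in>{1..3}. Re (zq a k l) * Re (zq b k l))"

lemma QI: "4 * complex_of_real (Qf a b) =
  4 * (2 * ((\<Sum>m<4. a m * cnj (b m)) * cnj (\<Sum>m<4. a m * cnj (b m)))
   - (\<Sum>m<4. cnj (a m) * a m) * (\<Sum>m<4. cnj (b m) * b m)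
   + 2 * (cnj (- (a 0 * b 3) + a 1 * b 2 + a 2 * b 1 - a 3 * b 0) * (- (a 0 * b 3) + a 1 * b 2 + a 2 * b 1 - a 3 * b 0)))"
  apply (simp only: Qf_def sum13)
  apply (simp only: of_real_add of_real_mult distrib_left Re_prod4)
  unfolding zq_def tr_11[of "\<lambda>(m,n). a m * cnj (a n)"] tr_12[of "\<lambda>(m,n). a m * cnj (a n)"]
    tr_13[of "\<lambda>(m,n). a m * cnj (a n)"] tr_21[of "\<lambda>(m,n). a m * cnj (a n)"]
    tr_22[of "\<lambda>(m,n). a m * cnj (a n)"] tr_23[of "\<lambda>(m,n). a m * cnj (a n)"]
    tr_31[of "\<lambda>(m,n). a m * cnj (a n)"] tr_32[of "\<lambda>(m,n). a m * cnj (a n)"]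
    tr_33[of "\<lambda>(m,n). a m * cnj (a n)"]
    tr_11[of "\<lambda>(m,n). b m * cnj (b n)"] tr_12[of "\<lambda>(m,n). b m * cnj (b n)"]
    tr_13[of "\<lambda>(m,n). b m * cnj (b n)"] tr_21[of "\<lambda>(m,n). b m * cnj (b n)"]
    tr_22[of "\<lambda>(m,n). b m * cnj (b n)"] tr_23[of "\<lambda>(m,n). b m * cnj (b n)"]
    tr_31[of "\<lambda>(m,n). b m * cnj (b n)"] tr_32[of "\<lambda>(m,n). b m * cnj (b n)"]
    tr_33[of "\<lambda>(m,n). b m * cnj (b n)"]
  apply (simp only: case_prod_conv sum4 complex_cnj_add complex_cnj_mult complex_cnj_diff
     complex_cnj_minus complex_cnj_i complex_cnj_cnj complex_cnj_numeral complex_cnj_one cnj_sum)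
  apply (simp only: iR1 iR2 iR3)
  apply (simp only: iR1 iR2 iR5)
  by (simp add: algebra_simps)


lemma QI2: "complex_of_real (Qf a b) =
  2 * ((\<Sum>m<4. a m * cnj (b m)) * cnj (\<Sum>m<4. a m * cnj (b m)))
   - (\<Sum>m<4. cnj (a m) * a m) * (\<Sum>m<4. cnj (b m) * b m)
   + 2 * (cnj (- (a 0 * b 3) + a 1 * b 2 + a 2 * b 1 - a 3 * b 0) * (- (a 0 * b 3) + a 1 * b 2 + a 2 * b 1 - a 3 * b 0))"
  by (rule mult_left_cancel[THEN iffD1, OF _ QI]) simp

lemma QI_real: "Qf a b = 2 * (cmod (\<Sum>m<4. a m * cnj (b m)))\<^sup>2
   - (\<Sum>m<4. (cmod (a m))\<^sup>2) * (\<Sum>m<4. (cmod (b m))\<^sup>2)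
   + 2 * (cmod (- (a 0 * b 3) + a 1 * b 2 + a 2 * b 1 - a 3 * b 0))\<^sup>2"
proof -
  have "complex_of_real (Qf a b) = complex_of_real (2 * (cmod (\<Sum>m<4. a m * cnj (b m)))\<^sup>2
   - (\<Sum>m<4. (cmod (a m))\<^sup>2) * (\<Sum>m<4. (cmod (b m))\<^sup>2)
   + 2 * (cmod (- (a 0 * b 3) + a 1 * b 2 + a 2 * b 1 - a 3 * b 0))\<^sup>2)"
    unfolding QI2 of_real_add of_real_diff of_real_mult of_real_sum cmod_sq_cnj
    by (simp add: mult.commute)
  thus ?thesis using of_real_eq_iff by blast
qed

lemma tcorr_rho: "tcorr (rho_of v) k l = Re (zq (v 0) k l) + Re (zq (v 1) k l)"
  unfolding tcorr_def rho_of_def trace_expl zq_def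
  by (simp add: sum2 distrib_right sum.distrib)

definition "na v r = (\<Sum>m<4. (cmod (v r m))\<^sup>2)"
definition "ipv v = (\<Sum>m<4. v 0 m * cnj (v 1 m))"

lemma Sval_formula: "Sval (rho_of v) = (na v 0 + na v 1)\<^sup>2 + 2 * FF v - 4 * (na v 0 * na v 1 - (cmod (ipv v))\<^sup>2)"
proof -
  have "Sval (rho_of v) = Qf (v 0) (v 0) + Qf (v 1) (v 1) + 2 * Qf (v 0) (v 1)"
    unfolding Sval_def tcorr_rho Qf_def
    by (simp add: power2_eq_square algebra_simps sum.distrib sum_distrib_left)
  moreover have "(cmod (\<Sum>m<4. v r m * cnj (v r m)))\<^sup>2 = (na v r)\<^sup>2" for r
  proof -
    have "(\<Sum>m<4. v r m * cnj (v r m)) = complex_of_real (na v r)"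
      unfolding na_def of_real_sum cmod_sq_cnj by (simp add: mult.commute)
    moreover have "0 \<le> na v r" unfolding na_def by (simp add: sum_nonneg)
    ultimately show ?thesis by simp
  qed
  moreover have "gg v 1 0 = gg v 0 1" by (rule gg_sym)
  ultimately show ?thesis
    unfolding QI_real FF_def sum2 ipv_def na_def[symmetric] gg_def[symmetric]
    by (simp add: algebra_simps power2_eq_square)
qed

lemma I2_real: "FF (vik T) + FF (vjk T) = 4 * (na (vij T) 0 * na (vij T) 1 - (cmod (ipv (vij T)))\<^sup>2)"
proof -
  have "complex_of_real (FF (vik T) + FF (vjk T)) = complex_of_real (4 * (na (vij T) 0 * na (vij T) 1 - (cmod (ipv (vij T)))\<^sup>2))"
    using I2c[of T] unfolding of_real_add of_real_diff of_real_mult na_def of_real_sum cmod_sq_cnj aa_def bb_def cc_def ipv_def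
    by (simp add: mult.commute)
  thus ?thesis using of_real_eq_iff by blast
qed


definition qf :: "(nat \<Rightarrow> complex) \<Rightarrow> (nat \<Rightarrow> complex) \<Rightarrow> complex" where
  "qf w u = - (w 0 * u 3) + w 1 * u 2 + w 2 * u 1 - w 3 * u 0"
definition nw :: "(nat \<Rightarrow> complex) \<Rightarrow> real" where
  "nw w = (\<Sum>m<4. (cmod (w m))\<^sup>2)"

lemma K1: "cmod (qf w w) \<le> nw w"
proof -
  have e: "qf w w = 2 * (w 1 * w 2) - 2 * (w 0 * w 3)" unfolding qf_def by (simp add: algebra_simps)
  have "cmod (qf w w) \<le> 2 * (cmod (w 1) * cmod (w 2)) + 2 * (cmod (w 0) * cmod (w 3))"
    unfolding e by (rule order_trans[OF norm_triangle_ineq4]) (simp add: norm_mult)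
  also have "\<dots> \<le> nw w" unfolding nw_def sum4
    using sum_squares_bound[of "cmod (w 1)" "cmod (w 2)"] sum_squares_bound[of "cmod (w 0)" "cmod (w 3)"]
    by simp
  finally show ?thesis .
qed

lemma parallelogram_c: "(cmod (x + y))\<^sup>2 + (cmod (x - y))\<^sup>2 = 2 * (cmod x)\<^sup>2 + 2 * (cmod y)\<^sup>2"
  unfolding cmod_power2 by (simp add: algebra_simps power2_eq_square)

lemma K2: "cmod (qf w u) \<le> (nw w + nw u) / 2"
proof -
  have e: "qf w u = (qf (\<lambda>m. w m + u m) (\<lambda>m. w m + u m) - qf (\<lambda>m. w m - u m) (\<lambda>m. w m - u m)) / 4"
    unfolding qf_def by (simp add: algebra_simps)
  have "cmod (qf w u) \<le> (cmod (qf (\<lambda>m. w m + u m) (\<lambda>m. w m + u m)) + cmod (qf (\<lambda>m. w m - u m) (\<lambda>m. w m - u m))) / 4"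
    unfolding e by (simp add: norm_divide norm_triangle_ineq4 divide_right_mono)
  also have "\<dots> \<le> (nw (\<lambda>m. w m + u m) + nw (\<lambda>m. w m - u m)) / 4"
    using K1[of "\<lambda>m. w m + u m"] K1[of "\<lambda>m. w m - u m"] by simp
  also have "nw (\<lambda>m. w m + u m) + nw (\<lambda>m. w m - u m) = 2 * nw w + 2 * nw u"
    unfolding nw_def sum4 using parallelogram_c[of "w 0" "u 0"] parallelogram_c[of "w 1" "u 1"]
      parallelogram_c[of "w 2" "u 2"] parallelogram_c[of "w 3" "u 3"] by simp
  finally show ?thesis by simp
qed


definition "lin v x0 x1 = (\<lambda>m. x0 * v 0 m + x1 * v 1 m)"

lemma cmod_lin_sq: "(cmod (x0 * p + x1 * q))\<^sup>2 = (cmod x0)\<^sup>2 * (cmod p)\<^sup>2 + (cmod x1)\<^sup>2 * (cmod q)\<^sup>2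
   + 2 * Re (x0 * cnj x1 * (p * cnj q))"
  unfolding cmod_power2 by (simp add: algebra_simps power2_eq_square)

lemma K3: "nw (lin v x0 x1) = (cmod x0)\<^sup>2 * na v 0 + (cmod x1)\<^sup>2 * na v 1 + 2 * Re (x0 * cnj x1 * ipv v)"
proof -
  have r: "(\<Sum>m<4. Re (x0 * cnj x1 * (v 0 m * cnj (v 1 m)))) = Re (x0 * cnj x1 * (\<Sum>m<4. v 0 m * cnj (v 1 m)))"
    unfolding sum_distrib_left Re_sum ..
  have "nw (lin v x0 x1) = (\<Sum>m<4. (cmod x0)\<^sup>2 * (cmod (v 0 m))\<^sup>2 + (cmod x1)\<^sup>2 * (cmod (v 1 m))\<^sup>2
      + 2 * Re (x0 * cnj x1 * (v 0 m * cnj (v 1 m))))"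
    unfolding nw_def lin_def cmod_lin_sq ..
  also have "\<dots> = (cmod x0)\<^sup>2 * na v 0 + (cmod x1)\<^sup>2 * na v 1 + 2 * (\<Sum>m<4. Re (x0 * cnj x1 * (v 0 m * cnj (v 1 m))))"
    unfolding na_def by (simp add: sum.distrib sum_distrib_left)
  finally show ?thesis unfolding r ipv_def .
qed

lemma K3b:
  fixes a b X Y C R :: real
  assumes ab: "a + b = 1" and x: "4 * (a * b - C\<^sup>2) \<ge> 8/9" and C0: "0 \<le> C"
    and X0: "0 \<le> X" and Y0: "0 \<le> Y" and R: "R \<le> X * Y * C"
  shows "X\<^sup>2 * a + Y\<^sup>2 * b + 2 * R \<le> 2/3 * (X\<^sup>2 + Y\<^sup>2)"
proof -
  define p where "p = 2/3 - a"
  define q where "q = 2/3 - b"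
  have pq: "C\<^sup>2 \<le> p * q" unfolding p_def q_def using ab x by (simp add: algebra_simps power2_eq_square)
  have "4 * (a * b) - 4 * C\<^sup>2 \<ge> 8/9" using x by (simp add: algebra_simps)
  hence "a * b \<ge> 2/9" using zero_le_power2[of C] by linarith
  hence ab2: "a * b \<ge> 2/9" .
  have b: "b = 1 - a" using ab by simp
  have e1: "(a - 1/3) * (a - 2/3) = 2/9 - a * b" unfolding b by (simp add: field_simps)
  have e2: "(b - 1/3) * (b - 2/3) = 2/9 - a * b" unfolding b by (simp add: field_simps)
  have "a \<le> 2/3"
  proof (rule ccontr)
    assume "\<not> a \<le> 2/3"
    hence "(a - 1/3) * (a - 2/3) > 0" by (intro mult_pos_pos) auto
    thus False using e1 ab2 by linarith
  qed
  moreover have "b \<le> 2/3"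
  proof (rule ccontr)
    assume "\<not> b \<le> 2/3"
    hence "(b - 1/3) * (b - 2/3) > 0" by (intro mult_pos_pos) auto
    thus False using e2 ab2 by linarith
  qed
  ultimately have p0: "0 \<le> p" and q0: "0 \<le> q" unfolding p_def q_def by auto
  have main: "0 \<le> p * X\<^sup>2 + q * Y\<^sup>2 - 2 * C * X * Y"
  proof (cases "p = 0")
    case True
    hence "C\<^sup>2 \<le> 0" using pq by simp
    hence "C = 0" by simp
    thus ?thesis using True q0 by simp
  next
    case False
    hence pp: "p > 0" using p0 by simp
    have "p * (p * X\<^sup>2 + q * Y\<^sup>2 - 2 * C * X * Y) = (p * X - C * Y)\<^sup>2 + (p * q - C\<^sup>2) * Y\<^sup>2"
      by (simp add: algebra_simps power2_eq_square)
    also have "\<dots> \<ge> 0" using pq by simp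
    finally show ?thesis using pp by (simp add: zero_le_mult_iff)
  qed
  show ?thesis using main R X0 Y0 unfolding p_def q_def by (simp add: algebra_simps)
qed


lemma K4: "qf (lin v y0 y1) (lin v x0 x1) = y0 * x0 * gg v 0 0 + y0 * x1 * gg v 0 1 + y1 * x0 * gg v 1 0 + y1 * x1 * gg v 1 1"
  unfolding qf_def lin_def gg_def by (simp add: algebra_simps)

context
  fixes v :: "nat \<Rightarrow> nat \<Rightarrow> complex"
  assumes hab: "na v 0 + na v 1 = 1"
    and hx: "4 * (na v 0 * na v 1 - (cmod (ipv v))\<^sup>2) \<ge> 8/9"
begin

lemma K3c: "nw (lin v x0 x1) \<le> 2/3 * ((cmod x0)\<^sup>2 + (cmod x1)\<^sup>2)"
proof -
  have "Re (x0 * cnj x1 * ipv v) \<le> cmod x0 * cmod x1 * cmod (ipv v)"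
    using complex_Re_le_cmod[of "x0 * cnj x1 * ipv v"] by (simp add: norm_mult)
  thus ?thesis unfolding K3
    by (intro K3b[OF hab hx]) auto
qed

lemma K5: "cmod (y0 * x0 * gg v 0 0 + y0 * x1 * gg v 0 1 + y1 * x0 * gg v 1 0 + y1 * x1 * gg v 1 1)
   \<le> 1/3 * ((cmod y0)\<^sup>2 + (cmod y1)\<^sup>2 + (cmod x0)\<^sup>2 + (cmod x1)\<^sup>2)"
proof -
  have "cmod (qf (lin v y0 y1) (lin v x0 x1)) \<le> (nw (lin v y0 y1) + nw (lin v x0 x1)) / 2" by (rule K2)
  also have "\<dots> \<le> (2/3 * ((cmod y0)\<^sup>2 + (cmod y1)\<^sup>2) + 2/3 * ((cmod x0)\<^sup>2 + (cmod x1)\<^sup>2)) / 2"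
    using K3c[of y0 y1] K3c[of x0 x1] by (intro divide_right_mono add_mono) auto
  finally have "cmod (qf (lin v y0 y1) (lin v x0 x1)) \<le> (2/3 * ((cmod y0)\<^sup>2 + (cmod y1)\<^sup>2) + 2/3 * ((cmod x0)\<^sup>2 + (cmod x1)\<^sup>2)) / 2" .
  thus ?thesis unfolding K4 by (simp add: field_simps)
qed

lemma K6: "(cmod (gg v 0 0 * x0 + gg v 0 1 * x1))\<^sup>2 + (cmod (gg v 1 0 * x0 + gg v 1 1 * x1))\<^sup>2
    \<le> 4/9 * ((cmod x0)\<^sup>2 + (cmod x1)\<^sup>2)"
proof -
  define u0 where "u0 = gg v 0 0 * x0 + gg v 0 1 * x1"
  define u1 where "u1 = gg v 1 0 * x0 + gg v 1 1 * x1"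
  define N where "N = (cmod u0)\<^sup>2 + (cmod u1)\<^sup>2"
  define y0 where "y0 = 3/2 * cnj u0"
  define y1 where "y1 = 3/2 * cnj u1"
  have "y0 * x0 * gg v 0 0 + y0 * x1 * gg v 0 1 + y1 * x0 * gg v 1 0 + y1 * x1 * gg v 1 1 = y0 * u0 + y1 * u1"
    unfolding u0_def u1_def by (simp add: algebra_simps)
  also have "\<dots> = complex_of_real (3/2 * N)"
    unfolding y0_def y1_def N_def of_real_mult of_real_add cmod_sq_cnj by (simp add: algebra_simps)
  finally have eq: "y0 * x0 * gg v 0 0 + y0 * x1 * gg v 0 1 + y1 * x0 * gg v 1 0 + y1 * x1 * gg v 1 1 = complex_of_real (3/2 * N)" .
  have N0: "0 \<le> N" unfolding N_def by simp
  have "cmod (y0 * x0 * gg v 0 0 + y0 * x1 * gg v 0 1 + y1 * x0 * gg v 1 0 + y1 * x1 * gg v 1 1) = 3/2 * N"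
    unfolding eq using N0 by simp
  moreover have "(cmod y0)\<^sup>2 + (cmod y1)\<^sup>2 = 9/4 * N"
    unfolding y0_def y1_def N_def by (simp add: norm_mult power2_eq_square field_simps)
  ultimately have "3/2 * N \<le> 1/3 * (9/4 * N + (cmod x0)\<^sup>2 + (cmod x1)\<^sup>2)"
    using K5[of y0 x0 x1 y1] by simp
  hence "N \<le> 4/9 * ((cmod x0)\<^sup>2 + (cmod x1)\<^sup>2)" by simp
  thus ?thesis unfolding N_def u0_def u1_def .
qed

end


lemma lagrange_c: "((cmod a)\<^sup>2 + (cmod c)\<^sup>2) * ((cmod b)\<^sup>2 + (cmod d)\<^sup>2) - (cmod (a * cnj b + c * cnj d))\<^sup>2
   = (cmod (a * d - b * c))\<^sup>2"
  unfolding cmod_power2 by (simp add: algebra_simps power2_eq_square)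

lemma final_real:
  fixes L F h :: real
  assumes L: "L > 0" and h0: "0 \<le> h" and F2: "F \<le> 2 * L" and q: "0 \<le> L\<^sup>2 - L * F + h\<^sup>2"
  shows "F - 2 * h \<le> L"
proof (rule ccontr)
  assume "\<not> F - 2 * h \<le> L"
  hence F: "F > L + 2 * h" by simp
  hence "L * F > L * (L + 2 * h)" using L by (intro mult_strict_left_mono) auto
  hence "0 < h\<^sup>2 - 2 * L * h" using q by (simp add: algebra_simps power2_eq_square)
  hence "0 < h * (h - 2 * L)" by (simp add: algebra_simps power2_eq_square)
  hence "h - 2 * L > 0" using h0 by (simp add: zero_less_mult_iff)
  thus False using F F2 L by linarith
qed

lemma K7:
  fixes g00 g01 g10 g11 :: complex and L :: real
  assumes L: "L > 0"
    and N: "\<And>x0 x1. (cmod (g00 * x0 + g01 * x1))\<^sup>2 + (cmod (g10 * x0 + g11 * x1))\<^sup>2 \<le> L * ((cmod x0)\<^sup>2 + (cmod x1)\<^sup>2)"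
  shows "(cmod g00)\<^sup>2 + (cmod g01)\<^sup>2 + (cmod g10)\<^sup>2 + (cmod g11)\<^sup>2 - 2 * cmod (g00 * g11 - g01 * g10) \<le> L"
proof -
  define p where "p = (cmod g00)\<^sup>2 + (cmod g10)\<^sup>2"
  define q where "q = (cmod g01)\<^sup>2 + (cmod g11)\<^sup>2"
  define w where "w = g00 * cnj g01 + g10 * cnj g11"
  have Nid: "(cmod (g00 * x0 + g01 * x1))\<^sup>2 + (cmod (g10 * x0 + g11 * x1))\<^sup>2
     = p * (cmod x0)\<^sup>2 + q * (cmod x1)\<^sup>2 + 2 * Re (x0 * cnj x1 * w)" for x0 x1
    unfolding p_def q_def w_def cmod_power2 by (simp add: algebra_simps power2_eq_square)
  have pL: "p \<le> L" using N[of 1 0] unfolding Nid by simp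
  have qL: "q \<le> L" using N[of 0 1] unfolding Nid by simp
  have det: "(L - p) * (L - q) \<ge> (cmod w)\<^sup>2"
  proof (cases "p = L")
    case False
    hence pl: "L - p > 0" using pL by simp
    have "p * (cmod (cnj w))\<^sup>2 + q * (cmod (complex_of_real (L - p)))\<^sup>2
       + 2 * Re (cnj w * cnj (complex_of_real (L - p)) * w) \<le> L * ((cmod (cnj w))\<^sup>2 + (cmod (complex_of_real (L - p)))\<^sup>2)"
      using N[of "cnj w" "complex_of_real (L - p)"] unfolding Nid .
    moreover have "cnj w * cnj (complex_of_real (L - p)) * w = complex_of_real ((L - p) * (cmod w)\<^sup>2)"
      unfolding of_real_mult cmod_sq_cnj by (simp add: algebra_simps)
    hence "Re (cnj w * cnj (complex_of_real (L - p)) * w) = (L - p) * (cmod w)\<^sup>2"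
      by (simp only: Re_complex_of_real)
    moreover have "cmod (cnj w) = cmod w" by simp
    moreover have "cmod (complex_of_real (L - p)) = L - p" using pl by (simp only: norm_of_real)
    ultimately have "p * (cmod w)\<^sup>2 + q * (L - p)\<^sup>2 + 2 * ((L - p) * (cmod w)\<^sup>2) \<le> L * ((cmod w)\<^sup>2 + (L - p)\<^sup>2)"
      by (simp only:)
    hence "0 \<le> (L - p) * ((L - p) * (L - q) - (cmod w)\<^sup>2)"
      by (simp add: algebra_simps power2_eq_square)
    thus ?thesis using pl by (simp add: zero_le_mult_iff)
  next
    case True
    have "w = 0"
    proof (rule ccontr)
      assume w0: "w \<noteq> 0"
      define t where "t = (L - q + 1) / (2 * (cmod w)\<^sup>2)"
      have cw: "(cmod w)\<^sup>2 > 0" using w0 by simp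
      have "p * (cmod (complex_of_real t * cnj w))\<^sup>2 + q * (cmod 1)\<^sup>2
         + 2 * Re (complex_of_real t * cnj w * cnj 1 * w) \<le> L * ((cmod (complex_of_real t * cnj w))\<^sup>2 + (cmod 1)\<^sup>2)"
        using N[of "complex_of_real t * cnj w" 1] unfolding Nid .
      moreover have "complex_of_real t * cnj w * cnj 1 * w = complex_of_real (t * (cmod w)\<^sup>2)"
        unfolding of_real_mult cmod_sq_cnj by (simp add: algebra_simps)
      hence "Re (complex_of_real t * cnj w * cnj 1 * w) = t * (cmod w)\<^sup>2"
        by (simp only: Re_complex_of_real)
      moreover have "(cmod (complex_of_real t * cnj w))\<^sup>2 = t\<^sup>2 * (cmod w)\<^sup>2"
        by (simp add: norm_mult power_mult_distrib)
      moreover have "cmod 1 = 1" by simp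
      ultimately have "p * (t\<^sup>2 * (cmod w)\<^sup>2) + q * 1\<^sup>2 + 2 * (t * (cmod w)\<^sup>2) \<le> L * (t\<^sup>2 * (cmod w)\<^sup>2 + 1\<^sup>2)"
        by (simp only:)
      hence "2 * (t * (cmod w)\<^sup>2) \<le> L - q" using True by (simp add: algebra_simps)
      moreover have "2 * (t * (cmod w)\<^sup>2) = L - q + 1" unfolding t_def using cw by simp
      ultimately show False by simp
    qed
    thus ?thesis using True by simp
  qed
  have lag: "p * q - (cmod w)\<^sup>2 = (cmod (g00 * g11 - g01 * g10))\<^sup>2"
    unfolding p_def q_def w_def by (rule lagrange_c)
  show ?thesis
  proof -
    have "0 \<le> L\<^sup>2 - L * (p + q) + (cmod (g00 * g11 - g01 * g10))\<^sup>2"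
      using det lag by (simp add: algebra_simps power2_eq_square)
    hence "p + q - 2 * cmod (g00 * g11 - g01 * g10) \<le> L"
      by (intro final_real[OF L]) (use pL qL in auto)
    thus ?thesis unfolding p_def q_def by simp
  qed
qed


lemma KEY:
  assumes hab: "na v 0 + na v 1 = 1"
    and hx: "4 * (na v 0 * na v 1 - (cmod (ipv v))\<^sup>2) \<ge> 8/9"
  shows "FF v - 2 * cmod (DD v) \<le> 4/9"
proof -
  have "(cmod (gg v 0 0))\<^sup>2 + (cmod (gg v 0 1))\<^sup>2 + (cmod (gg v 1 0))\<^sup>2 + (cmod (gg v 1 1))\<^sup>2
      - 2 * cmod (gg v 0 0 * gg v 1 1 - gg v 0 1 * gg v 1 0) \<le> 4/9"
    by (rule K7) (use K6[OF hab hx] in auto)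
  thus ?thesis unfolding FF_def DD_def sum2 by (simp add: add.assoc)
qed

lemma perm_cases:
  assumes "{i, j, k} = {0, 1, 2::nat}"
  shows "(i = 0 \<and> j = 1 \<and> k = 2) \<or> (i = 0 \<and> j = 2 \<and> k = 1) \<or> (i = 1 \<and> j = 0 \<and> k = 2) \<or>
         (i = 1 \<and> j = 2 \<and> k = 0) \<or> (i = 2 \<and> j = 0 \<and> k = 1) \<or> (i = 2 \<and> j = 1 \<and> k = 0)"
proof -
  have "i \<in> {0,1,2}" "j \<in> {0,1,2}" "k \<in> {0,1,2}" "0 \<in> {i,j,k}" "1 \<in> {i,j,k}" "2 \<in> {i,j,k}"
    using assms by blast+
  thus ?thesis by auto
qed

lemma sum8: "(\<Sum>n<(8::nat). f n) = f 0 + f 1 + f 2 + f 3 + f 4 + f 5 + f 6 + (f 7 :: 'a::comm_monoid_add)"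
  by (simp add: eval_nat_numeral add.assoc)

lemma setup_facts:
  assumes "{i, j, k} = {0, 1, 2::nat}" and "pure_three_qubit psi"
  defines "T \<equiv> \<lambda>x y z. psi $ bidx i j x y z"
  shows "reduced psi i j = rho_of (vij T)" "reduced psi i k = rho_of (vik T)" "reduced psi j k = rho_of (vjk T)"
    "na (vij T) 0 + na (vij T) 1 = 1"
proof -
  have bik: "bidx i k x y r = bidx i j x r y" and bjk: "bidx j k x y r = bidx i j r x y" for x y r
    using perm_cases[OF assms(1)] by (auto simp: bidx_def qweight_def)
  show "reduced psi i j = rho_of (vij T)" unfolding reduced_def rho_of_def vij_def T_def ..
  show "reduced psi i k = rho_of (vik T)" unfolding reduced_def rho_of_def vik_def T_def bik ..
  show "reduced psi j k = rho_of (vjk T)" unfolding reduced_def rho_of_def vjk_def T_def bjk ..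
  have n: "(\<Sum>n<8. (cmod (psi $ n))\<^sup>2) = 1" using assms(2) unfolding pure_three_qubit_def by simp
  show "na (vij T) 0 + na (vij T) 1 = 1"
    using perm_cases[OF assms(1)] n unfolding na_def vij_def T_def sum4 sum8
    by (elim disjE; simp add: bidx_def qweight_def; simp add: numeral_2_eq_2 numeral_3_eq_3; linarith)
qed


theorem corollary3:
  fixes psi :: "complex vec" and i j k :: nat
  assumes "pure_three_qubit psi"
    and "{i, j, k} = {0, 1, 2}"
    and "F3_steerable (reduced psi i j)"
  shows "((concurrence (reduced psi i k))\<^sup>2 + (concurrence (reduced psi j k))\<^sup>2) / 2 < 4 / 9"
proof -
  define T where "T = (\<lambda>x y z. psi $ bidx i j x y z)"
  note sf = setup_facts[OF assms(2) assms(1), folded T_def]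
  define a where "a = na (vij T) 0"
  define b where "b = na (vij T) 1"
  define x where "x = 4 * (a * b - (cmod (ipv (vij T)))\<^sup>2)"
  define F where "F = FF (vij T)"
  define h where "h = cmod (DD (vij T))"
  have ab: "a + b = 1" using sf(4) unfolding a_def b_def .
  have h0: "0 \<le> h" unfolding h_def by simp
  have S: "Sval (reduced psi i j) = 1 + 2 * F - x"
    unfolding sf(1) Sval_formula a_def[symmetric] b_def[symmetric] ab F_def x_def by simp
  have S1: "2 * F > x" using assms(3) unfolding F3_steerable_def S by simp
  have C: "(concurrence (reduced psi i k))\<^sup>2 + (concurrence (reduced psi j k))\<^sup>2 = x - 4 * h"
    unfolding sf(2) sf(3) conc_rho_of I3 using I2_real[of T]
    unfolding x_def a_def b_def h_def by simp
  show ?thesis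
  proof (rule ccontr)
    assume "\<not> ?thesis"
    hence xh: "x - 4 * h \<ge> 8/9" unfolding C by simp
    hence "x \<ge> 8/9" using h0 by simp
    hence "F - 2 * h \<le> 4/9" unfolding F_def h_def
      by (intro KEY) (use sf(4) x_def a_def b_def in auto)
    thus False using S1 xh by simp
  qed
qed

end
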